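(* Let $\Delta\ge 3$ be an integer and let $G\in\mathcal{G}_\Delta$. Let $c_1,\dots,c_\Delta$ be real numbers with $0<c_\Delta\le \frac{2}{2\Delta+1}$ and $c_i=\min\left\{\frac{1-c_{i+1}}{i},\frac{2}{2i+1}\right\}$ for $1\le i\le \Delta-1$. Then $$\alpha(G)\ge \sum_{i=1}^{\Delta} c_i|V_i(G)|.$$
   Context: All graphs are simple, finite and undirected. For an integer $\Delta\ge 3$, $\mathcal{G}_\Delta$ denotes the set of connected graphs $G\neq K_{\Delta+1}$ with maximum degree $\Delta$. For a graph $G$ and $i\ge 1$, $V_i(G)$ is the set of vertices of $G$ of degree $i$. $\alpha(G)$ is the independence number of $G$ (maximum size of a set of pairwise non-adjacent vertices). *)

theory Defs
  imports Complex_Main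
begin

definition simple_graph :: "'a set \<Rightarrow> 'a set set \<Rightarrow> bool" where
  "simple_graph V E \<longleftrightarrow> finite V \<and> (\<forall>e\<in>E. e \<subseteq> V \<and> card e = 2)"

definition adj :: "'a set set \<Rightarrow> 'a \<Rightarrow> 'a \<Rightarrow> bool" where
  "adj E u v \<longleftrightarrow> {u, v} \<in> E"

definition neighbours :: "'a set \<Rightarrow> 'a set set \<Rightarrow> 'a \<Rightarrow> 'a set" where
  "neighbours V E v = {u \<in> V. adj E v u}"

definition degree :: "'a set \<Rightarrow> 'a set set \<Rightarrow> 'a \<Rightarrow> nat" where
  "degree V E v = card (neighbours V E v)"

definition max_degree :: "'a set \<Rightarrow> 'a set set \<Rightarrow> nat" where
  "max_degree V E = Max (degree V E ` V)"

definition connected_graph :: "'a set \<Rightarrow> 'a set set \<Rightarrow> bool" where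
  "connected_graph V E \<longleftrightarrow> V \<noteq> {} \<and>
     (\<forall>u\<in>V. \<forall>v\<in>V. (\<lambda>x y. x \<in> V \<and> y \<in> V \<and> adj E x y)\<^sup>*\<^sup>* u v)"

definition complete_graph :: "'a set \<Rightarrow> 'a set set \<Rightarrow> bool" where
  "complete_graph V E \<longleftrightarrow> (\<forall>u\<in>V. \<forall>v\<in>V. u \<noteq> v \<longrightarrow> adj E u v)"

definition is_complete_on :: "nat \<Rightarrow> 'a set \<Rightarrow> 'a set set \<Rightarrow> bool" where
  "is_complete_on n V E \<longleftrightarrow> card V = n \<and> complete_graph V E"

definition in_G_Delta :: "nat \<Rightarrow> 'a set \<Rightarrow> 'a set set \<Rightarrow> bool" where
  "in_G_Delta \<Delta> V E \<longleftrightarrow> simple_graph V E \<and> connected_graph V E \<and>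
     max_degree V E = \<Delta> \<and> \<not> is_complete_on (\<Delta> + 1) V E"

definition V_deg :: "'a set \<Rightarrow> 'a set set \<Rightarrow> nat \<Rightarrow> 'a set" where
  "V_deg V E i = {v \<in> V. degree V E v = i}"

definition independent_set :: "'a set \<Rightarrow> 'a set set \<Rightarrow> 'a set \<Rightarrow> bool" where
  "independent_set V E S \<longleftrightarrow> S \<subseteq> V \<and> (\<forall>u\<in>S. \<forall>v\<in>S. \<not> adj E u v)"

definition independence_number :: "'a set \<Rightarrow> 'a set set \<Rightarrow> nat" where
  "independence_number V E = Max (card ` {S. independent_set V E S})"

end

theory Submission
  imports Defs
begin

definition cN :: "'a set \<Rightarrow> 'a set set \<Rightarrow> 'a \<Rightarrow> 'a set" where
  "cN V E v = insert v (neighbours V E v)"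

definition cl :: "'a set \<Rightarrow> 'a set set \<Rightarrow> 'a \<Rightarrow> bool" where
  "cl V E v \<longleftrightarrow> (\<forall>u\<in>neighbours V E v. cN V E u = cN V E v)"

lemma adj_sym: "adj E u v = adj E v u"
  by (simp add: adj_def insert_commute)

lemma nb_diff: "neighbours (V - X) E y = neighbours V E y - X"
  by (auto simp: neighbours_def)

lemma nb_fin: "finite V \<Longrightarrow> finite (neighbours V E v)"
  by (simp add: neighbours_def)

lemma nb_sub: "neighbours V E v \<subseteq> V"
  by (auto simp: neighbours_def)

lemma nb_noloop: "{v} \<notin> E \<Longrightarrow> v \<notin> neighbours V E v"
  by (simp add: neighbours_def adj_def)

lemma card_cN: "finite V \<Longrightarrow> {v} \<notin> E \<Longrightarrow> card (cN V E v) = degree V E v + 1"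
  by (simp add: cN_def degree_def nb_fin nb_noloop)

lemma combine:
  assumes fin: "finite V" and XV: "X \<subseteq> V" and indS: "independent_set V E S"
    and nbS: "\<forall>s\<in>S. neighbours V E s \<subseteq> X" and SX: "S \<subseteq> X"
    and ind': "independent_set (V - X) E S'" and sX: "sum f X \<le> real (card S)"
    and s': "sum f (V - X) \<le> real (card S')"
  shows "\<exists>T. independent_set V E T \<and> sum f V \<le> real (card T)"
proof (intro exI conjI)
  have S'sub: "S' \<subseteq> V - X" using ind' by (simp add: independent_set_def)
  have noadj: "\<not> adj E u v" if "u \<in> S" "v \<in> S'" for u v
  proof
    assume "adj E u v"
    then have "v \<in> neighbours V E u" using that S'sub by (auto simp: neighbours_def)
    then show False using nbS that S'sub by auto
  qed
  show "independent_set V E (S \<union> S')"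
    using indS ind' noadj adj_sym[of E] unfolding independent_set_def by blast
  have finS: "finite S" using indS fin by (meson finite_subset independent_set_def)
  have finS': "finite S'" using S'sub fin by (meson finite_Diff finite_subset)
  have disj: "S \<inter> S' = {}" using SX S'sub by auto
  have "card (S \<union> S') = card S + card S'" using card_Un_disjoint[OF finS finS' disj] .
  moreover have "sum f V = sum f X + sum f (V - X)"
    using sum.subset_diff[OF XV fin, of f] by simp
  ultimately show "sum f V \<le> real (card (S \<union> S'))" using sX s' by simp
qed

locale cseq =
  fixes D :: nat and c :: "nat \<Rightarrow> real"
  assumes mono: "1 \<le> i \<Longrightarrow> i \<le> j \<Longrightarrow> j \<le> D \<Longrightarrow> c j \<le> c i"
    and nonneg: "1 \<le> i \<Longrightarrow> i \<le> D \<Longrightarrow> 0 \<le> c i"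
    and two: "1 \<le> i \<Longrightarrow> i \<le> D \<Longrightarrow> (2 * real i + 1) * c i \<le> 2"
    and step: "1 \<le> i \<Longrightarrow> i < D \<Longrightarrow> real i * c i + c (i + 1) \<le> 1"
    and one: "c 1 \<le> 1"
begin

lemma remove_ok:
  assumes fin: "finite V" and noloop: "\<forall>v\<in>V. {v} \<notin> E"
    and degD: "\<forall>v\<in>V. degree V E v \<le> D"
    and nocl: "\<forall>x\<in>V. \<not> cl V E x" and fc: "\<forall>x\<in>V. f x \<le> c (degree V E x)"
    and y: "y \<in> V - X"
  shows "(\<not> cl (V - X) E y \<longrightarrow> f y \<le> c (degree (V - X) E y)) \<and>
         (cl (V - X) E y \<longrightarrow> sum f (cN (V - X) E y) \<le> 1)"
proof (intro conjI impI)
  have degle: "degree (V - X) E x \<le> degree V E x" if "x \<in> V" for x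
    unfolding degree_def nb_diff by (intro card_mono) (auto simp: nb_fin fin)
  have deg1: "degree V E x \<ge> 1" if "x \<in> V" for x
  proof (rule ccontr)
    assume "\<not> degree V E x \<ge> 1"
    then have "card (neighbours V E x) = 0" by (simp add: degree_def)
    then have "neighbours V E x = {}" using nb_fin[OF fin, of E x] by simp
    then have "cl V E x" by (simp add: cl_def)
    then show False using nocl that by auto
  qed
  {
    assume ncl: "\<not> cl (V - X) E y"
    have "degree (V - X) E y \<ge> 1"
    proof (rule ccontr)
      assume "\<not> degree (V - X) E y \<ge> 1"
      then have "card (neighbours (V - X) E y) = 0" by (simp add: degree_def)
      then have "neighbours (V - X) E y = {}" using nb_fin[of "V - X" E y] fin by simp
      then have "cl (V - X) E y" by (simp add: cl_def)
      then show False using ncl by auto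
    qed
    moreover have "degree (V - X) E y \<le> degree V E y" using degle y by auto
    moreover have "degree V E y \<le> D" using degD y by auto
    ultimately have "c (degree V E y) \<le> c (degree (V - X) E y)" by (intro mono) auto
    then show "f y \<le> c (degree (V - X) E y)" using fc y by force
  }
  {
    assume cly: "cl (V - X) E y"
    define K where "K = cN (V - X) E y"
    define j where "j = degree (V - X) E y"
    have finV': "finite (V - X)" using fin by auto
    have KV': "K \<subseteq> V - X" using y nb_sub[of "V - X" E y] by (auto simp: K_def cN_def)
    have cNK: "cN (V - X) E z = K" if "z \<in> K" for z
      using that cly by (auto simp: K_def cN_def cl_def)
    have degK: "degree (V - X) E z = j" if "z \<in> K" for z
    proof -
      have "card (cN (V - X) E z) = card K" using cNK that by simp
      moreover have "card (cN (V - X) E z) = degree (V - X) E z + 1"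
        using card_cN[OF finV'] noloop KV' that by auto
      moreover have "card K = j + 1" unfolding K_def j_def
        using card_cN[OF finV'] noloop y by auto
      ultimately show ?thesis by simp
    qed
    have cardK: "card K = j + 1" unfolding K_def j_def
      using card_cN[OF finV'] noloop y by auto
    have "\<exists>z\<in>K. degree V E z \<ge> j + 1"
    proof (rule ccontr)
      assume "\<not> (\<exists>z\<in>K. degree V E z \<ge> j + 1)"
      then have le: "degree V E z \<le> j" if "z \<in> K" for z using that by force
      have eqn: "neighbours V E z = neighbours (V - X) E z" if "z \<in> K" for z
      proof -
        have sub: "neighbours (V - X) E z \<subseteq> neighbours V E z" by (auto simp: nb_diff)
        have "card (neighbours V E z) \<le> card (neighbours (V - X) E z)"
          using le[OF that] degK[OF that] by (simp add: degree_def)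
        then show ?thesis using card_subset_eq[OF nb_fin[OF fin] sub] card_mono[OF nb_fin[OF fin] sub]
          by (metis le_antisym)
      qed
      have "cl V E y"
        unfolding cl_def
      proof
        fix u assume u: "u \<in> neighbours V E y"
        have yK: "y \<in> K" by (simp add: K_def cN_def)
        then have uK: "u \<in> K" using u eqn[OF yK] by (simp add: K_def cN_def)
        have "cN V E u = K" using eqn[OF uK] cNK[OF uK] by (simp add: cN_def)
        moreover have "cN V E y = K" using eqn[OF yK] cNK[OF yK] by (simp add: cN_def)
        ultimately show "cN V E u = cN V E y" by simp
      qed
      then show False using nocl y by auto
    qed
    then obtain z where zK: "z \<in> K" and zdeg: "degree V E z \<ge> j + 1" by blast
    have zV: "z \<in> V" using zK KV' by auto
    have finK: "finite K" using KV' finV' finite_subset by blast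
    have fK: "f x \<le> c j" if "x \<in> K" "1 \<le> j" for x
    proof -
      have xV: "x \<in> V" using that KV' by auto
      have "j \<le> degree V E x" using degK[OF that(1)] degle[OF xV] by simp
      then have "c (degree V E x) \<le> c j" using that degD xV by (intro mono) auto
      then show ?thesis using fc xV by force
    qed
    show "sum f (cN (V - X) E y) \<le> 1"
    proof (cases "j = 0")
      case True
      then have "K = {y}" using cardK by (simp add: K_def cN_def card_1_singleton_iff)
      moreover have "f y \<le> c 1"
      proof -
        have "c (degree V E y) \<le> c 1" using deg1 degD y by (intro mono) auto
        then show ?thesis using fc y by force
      qed
      ultimately show ?thesis using one by (simp add: K_def[symmetric])
    next
      case False
      then have j1: "1 \<le> j" by simp
      have jD: "j < D" using zdeg degD zV by force
      have "sum f K = f z + sum f (K - {z})" using sum.remove[OF finK zK] by simp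
      also have "f z \<le> c (j + 1)"
      proof -
        have "c (degree V E z) \<le> c (j + 1)" using zdeg degD zV by (intro mono) auto
        then show ?thesis using fc zV by force
      qed
      also have "sum f (K - {z}) \<le> real (card (K - {z})) * c j"
        using sum_bounded_above[of "K - {z}" f "c j"] fK j1 by auto
      also have "card (K - {z}) = j" using cardK zK finK by simp
      finally have "sum f K \<le> c (j + 1) + real j * c j" by simp
      also have "\<dots> \<le> 1" using step[OF j1 jD] by simp
      finally show ?thesis by (simp add: K_def)
    qed
  }
qed

end

lemma comp_nb:
  assumes "\<forall>y\<in>V - X. neighbours V E y \<inter> X = {}" and "y \<in> V - X"
  shows "neighbours (V - X) E y = neighbours V E y"
  using assms by (auto simp: nb_diff)

lemma comp_props:
  assumes sep: "\<forall>y\<in>V - X. neighbours V E y \<inter> X = {}" and y: "y \<in> V - X"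
  shows "cl (V - X) E y = cl V E y" "cN (V - X) E y = cN V E y"
    "degree (V - X) E y = degree V E y"
proof -
  have e: "neighbours (V - X) E y = neighbours V E y" using comp_nb[OF sep y] .
  have e2: "neighbours (V - X) E u = neighbours V E u" if "u \<in> neighbours V E y" for u
  proof -
    have "u \<in> V - X" using that sep y nb_sub[of V E y] by auto
    then show ?thesis using comp_nb[OF sep] by auto
  qed
  show "cl (V - X) E y = cl V E y" unfolding cl_def cN_def using e e2 by auto
  show "cN (V - X) E y = cN V E y" unfolding cN_def using e by auto
  show "degree (V - X) E y = degree V E y" unfolding degree_def using e by auto
qed

context cseq
begin

lemma main:
  assumes "finite V" "\<forall>v\<in>V. {v} \<notin> E" "\<forall>v\<in>V. degree V E v \<le> D"
    "\<forall>y\<in>V. \<not> cl V E y \<longrightarrow> f y \<le> c (degree V E y)"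
    "\<forall>y\<in>V. cl V E y \<longrightarrow> sum f (cN V E y) \<le> 1"
  shows "\<exists>S. independent_set V E S \<and> sum f V \<le> real (card S)"
  using assms
proof (induction "card V" arbitrary: V rule: less_induct)
  case less
  note fin = less.prems(1) and noloop = less.prems(2) and degD = less.prems(3)
    and fnc = less.prems(4) and fcl = less.prems(5)
  have degle: "degree (V - X) E x \<le> degree V E x" if "x \<in> V" for x X
    unfolding degree_def nb_diff by (intro card_mono) (auto simp: nb_fin fin)
  have IH: "\<exists>S'. independent_set (V - X) E S' \<and> sum f (V - X) \<le> real (card S')"
    if XV: "X \<subseteq> V" and Xne: "X \<noteq> {}"
      and c1: "\<forall>y\<in>V - X. \<not> cl (V - X) E y \<longrightarrow> f y \<le> c (degree (V - X) E y)"
      and c2: "\<forall>y\<in>V - X. cl (V - X) E y \<longrightarrow> sum f (cN (V - X) E (y)) \<le> 1" for X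
  proof (rule less.hyps)
    show "card (V - X) < card V" using XV Xne fin
      by (metis Diff_disjoint Diff_subset Int_absorb2 card_seteq less_le card_mono subset_empty)
    show "finite (V - X)" using fin by simp
    show "\<forall>v\<in>V - X. {v} \<notin> E" using noloop by simp
    show "\<forall>v\<in>V - X. degree (V - X) E v \<le> D" using degD degle by (meson DiffD1 le_trans)
  qed (use c1 c2 in auto)
  show ?case
  proof (cases "V = {}")
    case True
    then show ?thesis by (intro exI[of _ "{}"]) (simp add: independent_set_def)
  next
    case ne: False
    show ?thesis
    proof (cases "\<exists>v\<in>V. cl V E v")
      case True
      then obtain v where vV: "v \<in> V" and clv: "cl V E v" by blast
      define X where "X = cN V E v"
      have XV: "X \<subseteq> V" using vV nb_sub[of V E v] by (auto simp: X_def cN_def)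
      have sep: "\<forall>y\<in>V - X. neighbours V E y \<inter> X = {}"
      proof (intro ballI equalityI subsetI)
        fix y u assume y: "y \<in> V - X" and u: "u \<in> neighbours V E y \<inter> X"
        show "u \<in> {}"
        proof (cases "u = v")
          case True
          then have "y \<in> neighbours V E v" using u y adj_sym[of E]
            by (auto simp: neighbours_def)
          then show ?thesis using y by (auto simp: X_def cN_def)
        next
          case False
          then have un: "u \<in> neighbours V E v" using u by (auto simp: X_def cN_def)
          then have "cN V E u = X" using clv by (auto simp: cl_def X_def)
          moreover have "y \<in> neighbours V E u" using u y adj_sym[of E]
            by (auto simp: neighbours_def)
          ultimately show ?thesis using y by (auto simp: cN_def)
        qed
      qed auto
      obtain S' where S': "independent_set (V - X) E S'" "sum f (V - X) \<le> real (card S')"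
      proof -
        have "\<exists>S'. independent_set (V - X) E S' \<and> sum f (V - X) \<le> real (card S')"
        proof (rule IH[OF XV])
          show "X \<noteq> {}" by (simp add: X_def cN_def)
          show "\<forall>y\<in>V - X. \<not> cl (V - X) E y \<longrightarrow> f y \<le> c (degree (V - X) E y)"
            using comp_props[OF sep] fnc by auto
          show "\<forall>y\<in>V - X. cl (V - X) E y \<longrightarrow> sum f (cN (V - X) E y) \<le> 1"
            using comp_props[OF sep] fcl by auto
        qed
        then show ?thesis using that by blast
      qed
      have "independent_set V E {v}" using vV noloop by (simp add: independent_set_def adj_def)
      moreover have "\<forall>s\<in>{v}. neighbours V E s \<subseteq> X" by (auto simp: X_def cN_def)
      moreover have "{v} \<subseteq> X" by (auto simp: X_def cN_def)
      moreover have "sum f X \<le> real (card {v})" using fcl vV clv by (simp add: X_def)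
      ultimately show ?thesis using combine[of V X E "{v}" S' f] fin XV S' by blast
    next
      case False
      then have nocl: "\<forall>x\<in>V. \<not> cl V E x" by blast
      have fc: "\<forall>x\<in>V. f x \<le> c (degree V E x)" using fnc nocl by blast
      have deg1: "degree V E x \<ge> 1" if "x \<in> V" for x
      proof (rule ccontr)
        assume "\<not> degree V E x \<ge> 1"
        then have "card (neighbours V E x) = 0" by (simp add: degree_def)
        then have "neighbours V E x = {}" using nb_fin[OF fin, of E x] by simp
        then have "cl V E x" by (simp add: cl_def)
        then show False using nocl that by auto
      qed
      define \<delta> where "\<delta> = Min (degree V E ` V)"
      have \<delta>le: "\<delta> \<le> degree V E x" if "x \<in> V" for x
        using that fin by (simp add: \<delta>_def)
      have "\<delta> \<in> degree V E ` V" unfolding \<delta>_def using fin ne by (intro Min_in) auto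
      then obtain v0 where v0: "v0 \<in> V" "degree V E v0 = \<delta>" by auto
      have \<delta>1: "1 \<le> \<delta>" using deg1 v0 by metis
      have fd: "f x \<le> c \<delta>" if "x \<in> V" for x
      proof -
        have "c (degree V E x) \<le> c \<delta>" using \<delta>1 \<delta>le[OF that] degD that by (intro mono) auto
        then show ?thesis using fc that by force
      qed
      have rem: "\<forall>y\<in>V - X. \<not> cl (V - X) E y \<longrightarrow> f y \<le> c (degree (V - X) E y)"
        "\<forall>y\<in>V - X. cl (V - X) E y \<longrightarrow> sum f (cN (V - X) E y) \<le> 1" for X
        using remove_ok[OF fin noloop degD nocl fc] by blast+
      show ?thesis
      proof (cases "\<exists>v\<in>V. \<exists>u\<in>neighbours V E v. degree V E v = \<delta> \<and> degree V E u \<noteq> \<delta>")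
        case True
        then obtain v u where vV: "v \<in> V" and u: "u \<in> neighbours V E v"
          and dv: "degree V E v = \<delta>" and du: "degree V E u \<noteq> \<delta>" by blast
        have uV: "u \<in> V" using u by (simp add: neighbours_def)
        have du': "\<delta> + 1 \<le> degree V E u" using du \<delta>le[OF uV] by simp
        have \<delta>D: "\<delta> < D" using du' degD uV by force
        define X where "X = cN V E v"
        have XV: "X \<subseteq> V" using vV nb_sub[of V E v] by (auto simp: X_def cN_def)
        obtain S' where S': "independent_set (V - X) E S'" "sum f (V - X) \<le> real (card S')"
          using IH[OF XV _ rem] by (auto simp: X_def cN_def)
        have finN: "finite (neighbours V E v)" using nb_fin[OF fin] .
        have vN: "v \<notin> neighbours V E v" using nb_noloop noloop vV by metis
        have "sum f X = f v + sum f (neighbours V E v)"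
          using finN vN by (simp add: X_def cN_def)
        also have "sum f (neighbours V E v) = f u + sum f (neighbours V E v - {u})"
          using sum.remove[OF finN u] .
        also have "f u \<le> c (\<delta> + 1)"
        proof -
          have "c (degree V E u) \<le> c (\<delta> + 1)" using du' degD uV by (intro mono) auto
          then show ?thesis using fc uV by force
        qed
        also have "sum f (neighbours V E v - {u}) \<le> real (card (neighbours V E v - {u})) * c \<delta>"
          using sum_bounded_above[of "neighbours V E v - {u}" f "c \<delta>"] fd nb_sub[of V E v]
          by auto
        also have "card (neighbours V E v - {u}) = \<delta> - 1"
          using u finN dv by (simp add: degree_def)
        also have "f v \<le> c \<delta>" using fd vV .
        finally have "sum f X \<le> c \<delta> + (c (\<delta> + 1) + real (\<delta> - 1) * c \<delta>)" by simp
        also have "\<dots> = real \<delta> * c \<delta> + c (\<delta> + 1)" using \<delta>1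
          by (simp add: of_nat_diff algebra_simps)
        also have "\<dots> \<le> 1" using step[OF \<delta>1 \<delta>D] .
        finally have sX: "sum f X \<le> real (card {v})" by simp
        have "independent_set V E {v}" using vV noloop by (simp add: independent_set_def adj_def)
        moreover have "\<forall>s\<in>{v}. neighbours V E s \<subseteq> X" by (auto simp: X_def cN_def)
        moreover have "{v} \<subseteq> X" by (auto simp: X_def cN_def)
        ultimately show ?thesis using combine[of V X E "{v}" S' f] fin XV S' sX by blast
      next
        case False
        then have reg: "degree V E u = \<delta>" if "v \<in> V" "degree V E v = \<delta>" "u \<in> neighbours V E v" for u v
          using that by blast
        have "\<not> cl V E v0" using nocl v0 by blast
        then obtain u where u: "u \<in> neighbours V E v0" and neq: "cN V E u \<noteq> cN V E v0"
          by (auto simp: cl_def)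
        have uV: "u \<in> V" using u by (simp add: neighbours_def)
        have du: "degree V E u = \<delta>" using reg[OF v0 u] .
        have finV: "\<And>x. finite (cN V E x)" using fin by (simp add: cN_def nb_fin)
        have ccu: "card (cN V E u) = \<delta> + 1" using card_cN[OF fin] noloop uV du by auto
        have ccv: "card (cN V E v0) = \<delta> + 1" using card_cN[OF fin] noloop v0 by auto
        have "\<not> cN V E u \<subseteq> cN V E v0"
          using card_subset_eq[OF finV] ccu ccv neq by metis
        then obtain w where wu: "w \<in> cN V E u" and wv: "w \<notin> cN V E v0" by blast
        have wne: "w \<noteq> v0" "w \<noteq> u" using wv u by (auto simp: cN_def)
        have wN: "w \<in> neighbours V E u" using wu wne by (simp add: cN_def)
        have wV: "w \<in> V" using wN by (simp add: neighbours_def)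
        have dw: "degree V E w = \<delta>" using reg[OF uV du wN] .
        have nadj: "\<not> adj E v0 w" using wv wV by (auto simp: cN_def neighbours_def)
        define X where "X = cN V E v0 \<union> cN V E w"
        have XV: "X \<subseteq> V" using v0 wV nb_sub[of V E v0] nb_sub[of V E w]
          by (auto simp: X_def cN_def)
        obtain S' where S': "independent_set (V - X) E S'" "sum f (V - X) \<le> real (card S')"
          using IH[OF XV _ rem] by (auto simp: X_def cN_def)
        have ccw: "card (cN V E w) = \<delta> + 1" using card_cN[OF fin] noloop wV dw by auto
        have uint: "u \<in> cN V E v0 \<inter> cN V E w"
          using u wN adj_sym[of E] uV by (auto simp: cN_def neighbours_def)
        have "card (cN V E v0 \<inter> cN V E w) \<ge> 1"
          using uint finV by (metis One_nat_def Suc_leI card_gt_0_iff empty_iff finite_Int)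
        then have cX: "card X \<le> 2 * \<delta> + 1"
          using card_Un_Int[OF finV finV, of v0 w] ccv ccw by (simp add: X_def)
        have "sum f X \<le> real (card X) * c \<delta>"
          using sum_bounded_above[of X f "c \<delta>"] fd XV by auto
        also have "\<dots> \<le> (2 * real \<delta> + 1) * c \<delta>"
        proof (rule mult_right_mono)
          show "real (card X) \<le> 2 * real \<delta> + 1" using cX by linarith
          show "0 \<le> c \<delta>" using nonneg[OF \<delta>1] degD v0 by force
        qed
        also have "\<dots> \<le> 2" using two[OF \<delta>1] degD v0 by force
        also have "(2::real) = real (card {v0, w})" using wne by simp
        finally have sX: "sum f X \<le> real (card {v0, w})" .
        have "independent_set V E {v0, w}"
          using v0 wV noloop nadj adj_sym[of E] by (auto simp: independent_set_def adj_def)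
        moreover have "\<forall>s\<in>{v0, w}. neighbours V E s \<subseteq> X" by (auto simp: X_def cN_def)
        moreover have "{v0, w} \<subseteq> X" by (auto simp: X_def cN_def)
        ultimately show ?thesis using combine[of V X E "{v0, w}" S' f] fin XV S' sX by blast
      qed
    qed
  qed
qed

end

lemma c_props:
  fixes \<Delta> :: nat and c :: "nat \<Rightarrow> real"
  assumes D3: "\<Delta> \<ge> 3" and pos: "0 < c \<Delta>" and le: "c \<Delta> \<le> 2 / (2 * real \<Delta> + 1)"
    and rec: "\<And>i. 1 \<le> i \<Longrightarrow> i \<le> \<Delta> - 1 \<Longrightarrow>
           c i = min ((1 - c (i + 1)) / real i) (2 / (2 * real i + 1))"
  shows "cseq \<Delta> c"
proof -
  have P: "0 < c (\<Delta> - k) \<and> c (\<Delta> - k) \<le> 2 / (2 * real (\<Delta> - k) + 1)" if "k \<le> \<Delta> - 1" for k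
    using that
  proof (induction k)
    case 0
    then show ?case using pos le by simp
  next
    case (Suc k)
    define i where "i = \<Delta> - Suc k"
    have i1: "1 \<le> i" "i \<le> \<Delta> - 1" using Suc.prems by (auto simp: i_def)
    have ip: "i + 1 = \<Delta> - k" using Suc.prems by (simp add: i_def)
    have IH: "0 < c (i + 1)" "c (i + 1) \<le> 2 / (2 * real (i + 1) + 1)"
      using Suc.IH Suc.prems ip by auto
    have "2 / (2 * real (i + 1) + 1) < 1" using i1 by (simp add: field_simps)
    then have "c (i + 1) < 1" using IH by linarith
    then have "0 < (1 - c (i + 1)) / real i" using i1 by (intro divide_pos_pos) auto
    moreover have "0 < 2 / (2 * real i + 1)" by simp
    ultimately show ?case using rec[OF i1] by (simp add: i_def[symmetric])
  qed
  have Q: "0 < c i \<and> c i \<le> 2 / (2 * real i + 1)" if "1 \<le> i" "i \<le> \<Delta>" for i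
    using P[of "\<Delta> - i"] that by simp
  have mono1: "c (i + 1) \<le> c i" if "1 \<le> i" "i < \<Delta>" for i
  proof -
    have q: "0 < c (i + 1)" "c (i + 1) \<le> 2 / (2 * real (i + 1) + 1)" using Q[of "i+1"] that by auto
    have "real (i + 1) * c (i + 1) \<le> real (i + 1) * (2 / (2 * real (i + 1) + 1))"
      using q by (intro mult_left_mono) auto
    also have "\<dots> \<le> 1" by (simp add: field_simps)
    finally have a: "real (i + 1) * c (i + 1) \<le> 1" .
    have ipos: "0 < real i" using that by simp
    have "c (i + 1) * real i \<le> 1 - c (i + 1)" using a by (simp add: algebra_simps)
    then have "c (i + 1) \<le> (1 - c (i + 1)) / real i" using ipos by (simp add: pos_le_divide_eq)
    moreover have "2 / (2 * real (i + 1) + 1) \<le> 2 / (2 * real i + 1)"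
      by (intro divide_left_mono) auto
    then have "c (i + 1) \<le> 2 / (2 * real i + 1)" using q(2) by linarith
    ultimately show ?thesis using rec[of i] that by simp
  qed
  show ?thesis
  proof
    fix i j :: nat assume "1 \<le> i" "i \<le> j" "j \<le> \<Delta>"
    then show "c j \<le> c i"
    proof -
      have "c (i + k) \<le> c i" if "i + k \<le> \<Delta>" for k
        using that
      proof (induction k)
        case 0 then show ?case by simp
      next
        case (Suc k)
        then have "c (i + k + 1) \<le> c (i + k)" using mono1[of "i + k"] \<open>1 \<le> i\<close> by simp
        then show ?case using Suc by simp
      qed
      from this[of "j - i"] show ?thesis using \<open>i \<le> j\<close> \<open>j \<le> \<Delta>\<close> by simp
    qed
  next
    fix i :: nat assume "1 \<le> i" "i \<le> \<Delta>"
    then show "0 \<le> c i" using Q by force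
  next
    fix i :: nat assume a: "1 \<le> i" "i \<le> \<Delta>"
    then have "c i \<le> 2 / (2 * real i + 1)" using Q by blast
    then show "(2 * real i + 1) * c i \<le> 2" by (simp add: pos_le_divide_eq mult.commute)
  next
    fix i :: nat assume a: "1 \<le> i" "i < \<Delta>"
    then have "c i \<le> (1 - c (i + 1)) / real i" using rec[of i] by simp
    then have "c i * real i \<le> 1 - c (i + 1)" using a by (simp add: pos_le_divide_eq)
    then show "real i * c i + c (i + 1) \<le> 1" by (simp add: algebra_simps)
  next
    have "c 1 \<le> 2 / 3" using Q[of 1] D3 by simp
    then show "c 1 \<le> 1" by simp
  qed
qed

theorem corollary1:
  fixes \<Delta> :: nat and V :: "'a set" and E :: "'a set set" and c :: "nat \<Rightarrow> real"
  assumes "\<Delta> \<ge> 3"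
    and "in_G_Delta \<Delta> V E"
    and "0 < c \<Delta>" and "c \<Delta> \<le> 2 / (2 * real \<Delta> + 1)"
    and "\<And>i. 1 \<le> i \<Longrightarrow> i \<le> \<Delta> - 1 \<Longrightarrow>
           c i = min ((1 - c (i + 1)) / real i) (2 / (2 * real i + 1))"
  shows "real (independence_number V E) \<ge> (\<Sum>i = 1..\<Delta>. c i * real (card (V_deg V E i)))"
proof -
  interpret cseq \<Delta> c using c_props assms(1,3,4,5) by blast
  have G: "simple_graph V E" "connected_graph V E" "max_degree V E = \<Delta>"
    "\<not> is_complete_on (\<Delta> + 1) V E" using assms(2) by (auto simp: in_G_Delta_def)
  have fin: "finite V" using G(1) by (simp add: simple_graph_def)
  have noloop: "\<forall>v\<in>V. {v} \<notin> E" using G(1) by (force simp: simple_graph_def)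
  have ne: "V \<noteq> {}" using G(2) by (simp add: connected_graph_def)
  have conn: "\<And>u v. u \<in> V \<Longrightarrow> v \<in> V \<Longrightarrow> (\<lambda>x y. x \<in> V \<and> y \<in> V \<and> adj E x y)\<^sup>*\<^sup>* u v"
    using G(2) by (simp add: connected_graph_def)
  have degD: "\<forall>v\<in>V. degree V E v \<le> \<Delta>"
    using G(3) fin by (auto simp: max_degree_def)
  have "\<Delta> \<in> degree V E ` V" using G(3) fin ne unfolding max_degree_def by (metis Max_in finite_imageI image_is_empty)
  then obtain x where xV: "x \<in> V" and dx: "degree V E x = \<Delta>" by auto
  have reach: "y \<in> cN V E v"
    if clv: "cl V E v" and vV: "v \<in> V" and yV: "y \<in> V" for v y
  proof -
    have "(\<lambda>x y. x \<in> V \<and> y \<in> V \<and> adj E x y)\<^sup>*\<^sup>* v y" using conn vV yV by blast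
    then show ?thesis
    proof (induction rule: rtranclp_induct)
      case base then show ?case by (simp add: cN_def)
    next
      case (step a b)
      show ?case
      proof (cases "a = v")
        case True
        then show ?thesis using step by (auto simp: cN_def neighbours_def)
      next
        case False
        then have "a \<in> neighbours V E v" using step by (simp add: cN_def)
        then have "cN V E a = cN V E v" using clv by (simp add: cl_def)
        moreover have "b \<in> cN V E a" using step by (auto simp: cN_def neighbours_def)
        ultimately show ?thesis by simp
      qed
    qed
  qed
  have nocl: "\<not> cl V E v" if vV: "v \<in> V" for v
  proof
    assume clv: "cl V E v"
    have cNV: "cN V E u = V" if "u \<in> V" for u
    proof (cases "u = v")
      case True
      then show ?thesis using reach[OF clv vV] vV nb_sub[of V E v] by (auto simp: cN_def)
    next
      case False
      then have "u \<in> neighbours V E v" using reach[OF clv vV that] by (simp add: cN_def)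
      then have "cN V E u = cN V E v" using clv by (simp add: cl_def)
      then show ?thesis using reach[OF clv vV] vV nb_sub[of V E v] by (auto simp: cN_def)
    qed
    have "card V = \<Delta> + 1" using cNV[OF xV] card_cN[OF fin] noloop xV dx by metis
    moreover have "complete_graph V E"
      unfolding complete_graph_def
    proof (intro ballI impI)
      fix a b assume "a \<in> V" "b \<in> V" "a \<noteq> b"
      then have "b \<in> neighbours V E a" using cNV[of a] by (auto simp: cN_def)
      then show "adj E a b" by (simp add: neighbours_def)
    qed
    ultimately show False using G(4) by (simp add: is_complete_on_def)
  qed
  obtain S where S: "independent_set V E S"
    "sum (\<lambda>v. c (degree V E v)) V \<le> real (card S)"
    using main[OF fin noloop degD, of "\<lambda>v. c (degree V E v)"] nocl by auto
  have finI: "finite {S. independent_set V E S}"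
    by (rule finite_subset[of _ "Pow V"]) (auto simp: independent_set_def fin)
  have "card S \<le> independence_number V E"
    unfolding independence_number_def using finI S(1) by (intro Max_ge) auto
  then have Sle: "sum (\<lambda>v. c (degree V E v)) V \<le> real (independence_number V E)"
    using S(2) by linarith
  have deg1: "1 \<le> degree V E v" if vV: "v \<in> V" for v
  proof -
    have "\<exists>w\<in>V. w \<noteq> v"
    proof (cases "v = x")
      case True
      have "neighbours V E x \<noteq> {}" using dx assms(1) by (auto simp: degree_def)
      then obtain w where "w \<in> neighbours V E x" by blast
      then show ?thesis using True noloop xV nb_noloop[of x E V] nb_sub[of V E x] by auto
    next
      case False then show ?thesis using xV by auto
    qed
    then obtain w where wV: "w \<in> V" and wv: "w \<noteq> v" by blast
    have "(\<lambda>x y. x \<in> V \<and> y \<in> V \<and> adj E x y)\<^sup>*\<^sup>* v w" using conn vV wV by blast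
    then obtain y where "y \<in> V" "adj E v y"
      using wv by (cases rule: converse_rtranclpE) auto
    then have "y \<in> neighbours V E v" by (simp add: neighbours_def)
    then have "neighbours V E v \<noteq> {}" by blast
    then show ?thesis using nb_fin[OF fin, of E v] by (simp add: degree_def card_gt_0_iff Suc_le_eq)
  qed
  have img: "degree V E ` V \<subseteq> {1..\<Delta>}" using deg1 degD by auto
  have "(\<Sum>i = 1..\<Delta>. c i * real (card (V_deg V E i)))
      = (\<Sum>i = 1..\<Delta>. sum (\<lambda>v. c (degree V E v)) {v. v \<in> V \<and> degree V E v = i})"
  proof (rule sum.cong)
    fix i assume "i \<in> {1..\<Delta>}"
    have "sum (\<lambda>v. c (degree V E v)) {v. v \<in> V \<and> degree V E v = i}
        = sum (\<lambda>v. c i) {v. v \<in> V \<and> degree V E v = i}" by (rule sum.cong) auto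
    then show "c i * real (card (V_deg V E i))
        = sum (\<lambda>v. c (degree V E v)) {v. v \<in> V \<and> degree V E v = i}"
      by (simp add: V_deg_def)
  qed simp
  also have "\<dots> = sum (\<lambda>v. c (degree V E v)) V"
    using sum.group[OF fin _ img, of "\<lambda>v. c (degree V E v)"] by simp
  finally show ?thesis using Sle by simp
qed

end
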